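(* There exists a kernel $K\in C(\mathbb{R}^3;\mathbb{R}^{3\times3})$ admitting a flow $X$ of $\omega_0$ (in the sense below) such that $X(t,\Xi)\subset\{0\}\times[-1,1]\times\{0\}$ for all sufficiently large $t>0$.
   Context: Let $\Xi=\{0\}\times[-1,1]\times[-1,1]\subset\mathbb{R}^3$, $\mathcal{H}^2_\Xi$ the two-dimensional Hausdorff measure on $\Xi$, and $\omega_0=(0,1,0)\,\mathcal{H}^2_\Xi$. A kernel $K\in C(\mathbb{R}^3;\mathbb{R}^{3\times3})$ admits a flow $X\in C([0,\infty)\times\Xi;\mathbb{R}^3)$ of $\omega_0$ if $X$ is differentiable with respect to $t$ and to $\alpha_2$, the velocity $u(t,x)=\int_\Xi K(x-X(t,\alpha))\,\partial_{\alpha_2}X(t,\alpha)\,d\mathcal{H}^2_\Xi(\alpha)$ exists for all $t\ge0$ and $x\in X(t,\Xi)$, and $\partial_tX(t,a)=u(t,X(t,a))$, $X(0,a)=a$ for all $(t,a)\in[0,\infty)\times\Xi$. *)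

theory Defs
  imports "HOL-Analysis.Analysis"
begin

definition pt :: "real \<Rightarrow> real \<Rightarrow> real \<Rightarrow> real^3" where
  "pt a b c = vector [a, b, c]"

definition Xi :: "(real^3) set" where
  "Xi = {pt 0 s r | s r. s \<in> {-1..1} \<and> r \<in> {-1..1}}"

definition Seg :: "(real^3) set" where
  "Seg = {pt 0 s 0 | s. s \<in> {-1..1}}"

definition dt :: "(real \<Rightarrow> real^3 \<Rightarrow> real^3) \<Rightarrow> real \<Rightarrow> real^3 \<Rightarrow> real^3" where
  "dt X t a = vector_derivative (\<lambda>s. X s a) (at t within {0..})"

definition da2 :: "(real \<Rightarrow> real^3 \<Rightarrow> real^3) \<Rightarrow> real \<Rightarrow> real^3 \<Rightarrow> real^3" where
  "da2 X t a = vector_derivative (\<lambda>s. X t (pt (a$1) s (a$3))) (at (a$2) within {-1..1})"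

text \<open>Integrand of the velocity, in the coordinates \<open>(\<alpha>\<^sub>2,\<alpha>\<^sub>3)\<close> of \<open>\<Xi>\<close>;
  \<open>\<H>\<^sup>2\<close> restricted to the flat square \<open>\<Xi>\<close> is Lebesgue measure on \<open>[-1,1]\<^sup>2\<close>.\<close>
definition vel_integrand ::
  "(real^3 \<Rightarrow> real^3^3) \<Rightarrow> (real \<Rightarrow> real^3 \<Rightarrow> real^3) \<Rightarrow> real \<Rightarrow> real^3 \<Rightarrow> real \<times> real \<Rightarrow> real^3" where
  "vel_integrand K X t x p =
     K (x - X t (pt 0 (fst p) (snd p))) *v da2 X t (pt 0 (fst p) (snd p))"

definition velocity ::
  "(real^3 \<Rightarrow> real^3^3) \<Rightarrow> (real \<Rightarrow> real^3 \<Rightarrow> real^3) \<Rightarrow> real \<Rightarrow> real^3 \<Rightarrow> real^3" where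
  "velocity K X t x = set_lebesgue_integral lborel ({-1..1} \<times> {-1..1}) (vel_integrand K X t x)"

text \<open>\<open>K\<close> admits the flow \<open>X\<close> of \<open>\<omega>\<^sub>0 = (0,1,0) \<H>\<^sup>2\<llcorner>\<Xi>\<close>.\<close>
definition admits_flow :: "(real^3 \<Rightarrow> real^3^3) \<Rightarrow> (real \<Rightarrow> real^3 \<Rightarrow> real^3) \<Rightarrow> bool" where
  "admits_flow K X \<longleftrightarrow>
     continuous_on ({0..} \<times> Xi) (\<lambda>(t, a). X t a) \<and>
     (\<forall>t\<ge>0. \<forall>a\<in>Xi. (\<lambda>s. X s a) differentiable (at t within {0..})) \<and>
     (\<forall>t\<ge>0. \<forall>a\<in>Xi. (\<lambda>s. X t (pt (a$1) s (a$3))) differentiable (at (a$2) within {-1..1})) \<and>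
     (\<forall>t\<ge>0. \<forall>x\<in>X t ` Xi. set_integrable lborel ({-1..1} \<times> {-1..1}) (vel_integrand K X t x)) \<and>
     (\<forall>t\<ge>0. \<forall>a\<in>Xi. dt X t a = velocity K X t (X t a)) \<and>
     (\<forall>a\<in>Xi. X 0 a = a)"

end

theory Submission
  imports Defs
begin

definition rr :: "real \<Rightarrow> real" where "rr t = max 0 (1 - t)"

lemma rr_cont: "continuous_on UNIV rr"
  unfolding rr_def by (intro continuous_intros)

lemma deriv_kink:
  fixes f :: "real \<Rightarrow> real"
  assumes "\<And>h. \<bar>f (x + h) - f x\<bar> \<le> \<bar>h\<bar> * g h" "(g \<longlongrightarrow> 0) (at 0)"
  shows "DERIV f x :> 0"
  unfolding DERIV_def
proof (rule Lim_null_comparison[OF _ assms(2)])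
  show "\<forall>\<^sub>F h in at 0. norm ((f (x + h) - f x) / h) \<le> g h"
    unfolding eventually_at_filter
  proof (intro always_eventually allI impI)
    fix h :: real assume "h \<noteq> 0"
    then have "\<bar>(f (x + h) - f x) / h\<bar> = \<bar>f (x + h) - f x\<bar> / \<bar>h\<bar>" by (simp add: abs_divide)
    also have "\<dots> \<le> g h" using assms(1)[of h] \<open>h \<noteq> 0\<close> by (simp add: divide_le_eq mult.commute)
    finally show "norm ((f (x + h) - f x) / h) \<le> g h" by simp
  qed
qed

lemma rr_pow_deriv:
  assumes n: "n \<ge> 2"
  shows "((\<lambda>t. rr t ^ n) has_real_derivative (- real n * rr t ^ (n - 1))) (at t)"
proof (cases "t < 1")
  case True
  have ev: "\<forall>\<^sub>F s in nhds t. rr s ^ n = (1 - s) ^ n"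
    using eventually_nhds_in_open[of "{..<1}" t] True
    by (auto simp: rr_def elim!: eventually_mono)
  have "((\<lambda>s. (1 - s) ^ n) has_real_derivative (real n * (1 - t) ^ (n - 1) * (0 - 1))) (at t)"
    by (intro derivative_eq_intros) auto
  then show ?thesis using True
    by (subst DERIV_cong_ev[OF refl ev refl]) (simp add: rr_def)
next
  case False
  show ?thesis
  proof (cases "t > 1")
    case True
    have ev: "\<forall>\<^sub>F s in nhds t. rr s ^ n = 0"
      using eventually_nhds_in_open[of "{1<..}" t] True n
      by (auto simp: rr_def elim!: eventually_mono)
    have z: "(0::real) ^ (n - Suc 0) = 0" using n by simp
    show ?thesis using True n
      by (subst DERIV_cong_ev[OF refl ev refl]) (simp add: rr_def z)
  next
    case False
    with \<open>\<not> t < 1\<close> have t: "t = 1" by simp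
    have D: "DERIV (\<lambda>t. rr t ^ n) 1 :> 0"
    proof (rule deriv_kink[where g = "\<lambda>h. \<bar>h\<bar> ^ (n - 1)"])
      fix h :: real
      have r0: "rr 1 = 0" by (simp add: rr_def)
      have "\<bar>rr (1 + h)\<bar> \<le> \<bar>h\<bar>" by (simp add: rr_def)
      then have "\<bar>rr (1 + h)\<bar> ^ n \<le> \<bar>h\<bar> ^ n" by (rule power_mono) simp
      also have "\<bar>h\<bar> ^ n = \<bar>h\<bar> * \<bar>h\<bar> ^ (n - 1)" using n
        by (metis Suc_diff_1 less_le_trans pos2 power_Suc)
      finally show "\<bar>rr (1 + h) ^ n - rr 1 ^ n\<bar> \<le> \<bar>h\<bar> * \<bar>h\<bar> ^ (n - 1)"
        using r0 n by (simp add: power_abs power_0_left)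
    next
      show "((\<lambda>h::real. \<bar>h\<bar> ^ (n - 1)) \<longlongrightarrow> 0) (at 0)"
      proof -
        have eq: "\<bar>0::real\<bar> ^ (n - 1) = 0" using n by simp
        have "((\<lambda>h::real. \<bar>h\<bar> ^ (n - 1)) \<longlongrightarrow> \<bar>0\<bar> ^ (n - 1)) (at 0)"
          by (intro tendsto_intros)
        then show ?thesis unfolding eq by simp
      qed
    qed
    have E: "- real n * rr t ^ (n - 1) = 0" using t n by (simp add: rr_def power_0_left)
    show ?thesis unfolding E using D t by simp
  qed
qed


definition k3 :: "real^3 \<Rightarrow> real" where
  "k3 z = - ((z$3)^2 * (z$3 - z$1)) / (2 * max ((z$3 - z$1)^2) (\<bar>z$3\<bar>^3 / 2))"

lemma k3_sq: "(k3 z)^2 \<le> \<bar>z$3\<bar>"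
proof -
  define a where "a = z$3"
  define d where "d = z$3 - z$1"
  define M where "M = max (d^2) (\<bar>a\<bar>^3 / 2)"
  have k: "k3 z = - (a^2 * d) / (2 * M)" by (simp add: k3_def a_def d_def M_def)
  show ?thesis
  proof (cases "M = 0")
    case True then show ?thesis by (simp add: k a_def[symmetric])
  next
    case False
    have M1: "M \<ge> d^2" and M2: "M \<ge> \<bar>a\<bar>^3/2" by (auto simp: M_def)
    have Mp: "M > 0" using False M1 by (metis le_less power2_less_0 less_le_trans not_le)
    have "M * M \<ge> d^2 * (\<bar>a\<bar>^3/2)"
      by (rule mult_mono[OF M1 M2]) (use Mp in auto)
    then have key: "a^4 * d^2 \<le> 4 * M^2 * \<bar>a\<bar>"
    proof -
      assume h: "M * M \<ge> d^2 * (\<bar>a\<bar>^3/2)"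
      have "a^4 * d^2 = 2 * (d^2 * (\<bar>a\<bar>^3/2)) * \<bar>a\<bar>"
        by (simp add: power_abs[symmetric] power2_eq_square power3_eq_cube power4_eq_xxxx
            abs_mult_self_eq algebra_simps)
      also have "\<dots> \<le> 2 * (M * M) * \<bar>a\<bar>"
        using h by (intro mult_right_mono mult_left_mono) auto
      also have "\<dots> \<le> 4 * M^2 * \<bar>a\<bar>"
        by (simp add: power2_eq_square mult_right_mono)
      finally show ?thesis .
    qed
    have "(k3 z)^2 = a^4 * d^2 / (4 * M^2)"
      by (simp add: k power_divide power_mult_distrib power2_eq_square power4_eq_xxxx)
    also have "\<dots> \<le> \<bar>a\<bar>"
      using key Mp by (simp add: divide_le_eq mult.commute)
    finally show ?thesis by (simp add: a_def)
  qed
qed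


lemma k3_cont: "continuous_on UNIV k3"
proof (rule continuous_at_imp_continuous_on, intro ballI)
  fix p :: "real^3"
  show "isCont k3 p"
  proof (cases "2 * max ((p$3 - p$1)^2) (\<bar>p$3\<bar>^3 / 2) = 0")
    case False
    show ?thesis unfolding k3_def
      by (intro continuous_intros False) simp
  next
    case True
    then have p3: "p$3 = 0" and p1: "p$1 = 0"
      by (auto simp: max_def split: if_splits)
    have kp: "k3 p = 0" by (simp add: k3_def p3 p1)
    have "(k3 \<longlongrightarrow> 0) (at p)"
    proof (rule Lim_null_comparison)
      show "\<forall>\<^sub>F z in at p. norm (k3 z) \<le> sqrt \<bar>z$3\<bar>"
      proof (intro always_eventually allI)
        fix z :: "real^3"
        have "sqrt ((k3 z)^2) \<le> sqrt \<bar>z$3\<bar>" using k3_sq by (rule real_sqrt_le_mono)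
        then show "norm (k3 z) \<le> sqrt \<bar>z$3\<bar>" by simp
      qed
      have "((\<lambda>z. sqrt \<bar>z$3\<bar>) \<longlongrightarrow> sqrt \<bar>p$3\<bar>) (at p)"
        by (intro tendsto_intros)
      then show "((\<lambda>z. sqrt \<bar>z$3\<bar>) \<longlongrightarrow> 0) (at p)" by (simp add: p3)
    qed
    then show ?thesis unfolding isCont_def kp .
  qed
qed


definition fff :: "real \<Rightarrow> real" where "fff t = rr t ^ 2"
definition ggf :: "real \<Rightarrow> real" where "ggf t = rr t ^ 2 - rr t ^ 3"

lemma k3_line:
  assumes s: "\<bar>s\<bar> \<le> 2" and z1: "z$1 = s * ggf t" and z3: "z$3 = s * fff t"
  shows "k3 z = s * (- 2 * rr t) / 4"
proof -
  define r where "r = rr t"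
  have d: "z$3 - z$1 = s * r^3" by (simp add: z1 z3 ggf_def fff_def r_def algebra_simps)
  have a: "z$3 = s * r^2" by (simp add: z3 fff_def r_def)
  have le: "\<bar>s * r^2\<bar>^3 / 2 \<le> (s * r^3)^2"
  proof -
    have "\<bar>s * r^2\<bar>^3 / 2 = (\<bar>s\<bar> / 2) * (s^2 * r^6)"
      by (simp add: abs_mult power_mult_distrib power_abs power2_eq_square power3_eq_cube
          abs_mult_self_eq algebra_simps eval_nat_numeral)
    also have "\<dots> \<le> 1 * (s^2 * r^6)"
      using s by (intro mult_right_mono) auto
    also have "\<dots> = (s * r^3)^2" by (simp add: power_mult_distrib flip: power_mult)
    finally show ?thesis .
  qed
  have M: "max ((z$3 - z$1)^2) (\<bar>z$3\<bar>^3 / 2) = (s * r^3)^2"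
    using le unfolding d a[symmetric] by (simp add: max_def)
  show ?thesis
  proof (cases "s * r = 0")
    case True
    then show ?thesis by (auto simp: k3_def M d a r_def)
  next
    case False
    then have "s \<noteq> 0" "r \<noteq> 0" by auto
    have "k3 z = - ((z$3)^2 * (z$3 - z$1)) / (2 * (s*r^3)^2)" by (simp only: k3_def M)
    also have "\<dots> = - ((s * r^2)^2 * (s*r^3)) / (2 * (s*r^3)^2)" by (simp only: d, simp only: a)
    also have "\<dots> = s * (- 2 * r) / 4" using \<open>s \<noteq> 0\<close> \<open>r \<noteq> 0\<close>
      by (simp add: field_simps power2_eq_square power3_eq_cube)
    finally show ?thesis by (simp add: r_def)
  qed
qed


definition kv :: "real^3 \<Rightarrow> real^3" where
  "kv z = (k3 z + 3/4 * z$3) *\<^sub>R axis 1 1 + k3 z *\<^sub>R axis 3 1"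

definition KK :: "real^3 \<Rightarrow> real^3^3" where
  "KK z = (\<chi> i j. if j = 2 then kv z $ i else 0)"

definition XX :: "real \<Rightarrow> real^3 \<Rightarrow> real^3" where
  "XX t a = a + (a$3 * ggf t) *\<^sub>R axis 1 1 + (a$3 * (fff t - 1)) *\<^sub>R axis 3 1"

definition cvec :: "real \<Rightarrow> real^3" where
  "cvec t = ((-2 * rr t + 3 * rr t^2) / 4) *\<^sub>R axis 1 1 + ((-2 * rr t) / 4) *\<^sub>R axis 3 1"

lemma KK_mult: "KK z *v w = w$2 *\<^sub>R kv z"
  by (simp add: KK_def vec_eq_iff matrix_vector_mult_def sum_3 mult.commute)

lemma kv_line:
  assumes s: "\<bar>s\<bar> \<le> 2" and z1: "z$1 = s * ggf t" and z3: "z$3 = s * fff t"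
  shows "kv z = s *\<^sub>R cvec t"
  using k3_line[OF assms]
  by (simp add: kv_def cvec_def z3 fff_def vec_eq_iff forall_3 axis_def field_simps)

lemma kv_cont: "continuous_on UNIV kv"
proof -
  have c: "continuous_on UNIV (\<lambda>z. k3 z)" using k3_cont by simp
  show ?thesis unfolding kv_def by (intro continuous_intros c)
qed

lemma KK_cont: "continuous_on UNIV KK"
  unfolding KK_def
proof (intro continuous_on_vec_lambda)
  fix i j :: 3
  show "continuous_on UNIV (\<lambda>z. if j = 2 then kv z $ i else 0)"
  proof (cases "j = 2")
    case True
    then show ?thesis using kv_cont by (simp add: continuous_on_component)
  qed simp
qed


lemma pt_eq: "pt a b c = a *\<^sub>R axis 1 1 + b *\<^sub>R axis 2 1 + c *\<^sub>R axis 3 1"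
  by (simp add: pt_def vec_eq_iff forall_3 axis_def)

lemma pt_nth [simp]: "pt a b c $ 1 = a" "pt a b c $ 2 = b" "pt a b c $ 3 = c"
  by (simp_all add: pt_def)

lemma XX_nth [simp]: "XX t a $ 1 = a$1 + a$3 * ggf t" "XX t a $ 2 = a$2" "XX t a $ 3 = a$3 * fff t"
  by (simp_all add: XX_def axis_def algebra_simps)

lemma ggf_deriv: "(ggf has_real_derivative (-2 * rr t + 3 * rr t^2)) (at t)"
proof -
  have "((\<lambda>t. rr t ^ 2 - rr t ^ 3) has_real_derivative
      (- real 2 * rr t ^ (2 - 1) - (- real 3 * rr t ^ (3 - 1)))) (at t)"
    by (intro DERIV_diff rr_pow_deriv) auto
  then show ?thesis by (simp add: ggf_def[abs_def])
qed

lemma fff_deriv: "(fff has_real_derivative (-2 * rr t)) (at t)"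
proof -
  have "((\<lambda>t. rr t ^ 2) has_real_derivative (- real 2 * rr t ^ (2 - 1))) (at t)"
    by (intro rr_pow_deriv) auto
  then show ?thesis by (simp add: fff_def[abs_def])
qed

lemma XX_deriv: "((\<lambda>s. XX s a) has_vector_derivative (4 * a$3) *\<^sub>R cvec t) (at t within S)"
proof -
  have g: "(ggf has_real_derivative (-2 * rr t + 3 * rr t^2)) (at t within S)"
    using ggf_deriv has_field_derivative_at_within by blast
  have f: "(fff has_real_derivative (-2 * rr t)) (at t within S)"
    using fff_deriv has_field_derivative_at_within by blast
  have "((\<lambda>s. a + (a$3 * ggf s) *\<^sub>R axis 1 1 + (a$3 * (fff s - 1)) *\<^sub>R axis 3 1) has_vector_derivative
     (0 + ((a$3 * ggf t) *\<^sub>R 0 + (a$3 * (-2 * rr t + 3 * rr t^2)) *\<^sub>R axis 1 1)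
        + ((a$3 * (fff t - 1)) *\<^sub>R 0 + (a$3 * (-2 * rr t - 0)) *\<^sub>R axis 3 1))) (at t within S)"
    by (intro has_vector_derivative_add has_vector_derivative_scaleR has_vector_derivative_const
        DERIV_cmult DERIV_diff g f DERIV_const)
  moreover have "(0 + ((a$3 * ggf t) *\<^sub>R 0 + (a$3 * (-2 * rr t + 3 * rr t^2)) *\<^sub>R axis 1 1)
        + ((a$3 * (fff t - 1)) *\<^sub>R 0 + (a$3 * (-2 * rr t - 0)) *\<^sub>R axis 3 1)) = (4 * a$3) *\<^sub>R cvec t"
    by (simp add: cvec_def vec_eq_iff forall_3 axis_def field_simps)
  moreover have "(\<lambda>s. XX s a) = (\<lambda>s. a + (a$3 * ggf s) *\<^sub>R axis 1 1 + (a$3 * (fff s - 1)) *\<^sub>R axis 3 1)"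
    by (simp add: XX_def[abs_def])
  ultimately show ?thesis by simp
qed

lemma XX_deriv2: "((\<lambda>s. XX t (pt b s c)) has_vector_derivative axis 2 1) (at x within S)"
proof -
  have "((\<lambda>s. b *\<^sub>R axis 1 1 + s *\<^sub>R (axis 2 1 :: real^3) + c *\<^sub>R axis 3 1 + (c * ggf t) *\<^sub>R axis 1 1
      + (c * (fff t - 1)) *\<^sub>R axis 3 1) has_vector_derivative
     (0 + (x *\<^sub>R 0 + 1 *\<^sub>R (axis 2 1 :: real^3)) + 0 + 0 + 0)) (at x within S)"
    by (intro has_vector_derivative_add has_vector_derivative_scaleR DERIV_ident
        has_vector_derivative_const)
  moreover have "(\<lambda>s. XX t (pt b s c)) = (\<lambda>s. pt b s c + (c * ggf t) *\<^sub>R axis 1 1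
      + (c * (fff t - 1)) *\<^sub>R axis 3 1)"
    by (simp add: XX_def)
  ultimately show ?thesis by (simp add: pt_eq)
qed


definition QQ :: "(real \<times> real) set" where "QQ = {-1..1} \<times> {-1..1}"

lemma QQ_cbox: "QQ = cbox (-1, -1) (1, 1)"
  by (simp add: QQ_def cbox_Pair_eq)

lemma QQ_sets: "QQ \<in> sets lborel"
  unfolding QQ_cbox by simp

lemma inner_int: "integral {-1..1} (\<lambda>y::real. a - y) = 2 * a"
proof -
  have "((\<lambda>y::real. a - y) has_integral ((a * 1 - 1^2/2) - (a * (-1) - (-1)^2/2))) {-1..1}"
  proof (rule fundamental_theorem_of_calculus)
    fix x :: real assume "x \<in> {-1..1}"
    show "((\<lambda>y::real. a * y - y^2/2) has_vector_derivative (a - x)) (at x within {-1..1})"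
    proof -
      have "((\<lambda>y::real. a * y - y^2/2) has_real_derivative (a * 1 - (real 2 * x ^ (2 - 1) * 1) / 2)) (at x within {-1..1})"
        by (intro derivative_eq_intros) auto
      then show "((\<lambda>y::real. a * y - y^2/2) has_vector_derivative (a - x)) (at x within {-1..1})"
        by (simp add: has_real_derivative_iff_has_vector_derivative)
    qed
  qed simp
  then show ?thesis by (simp add: integral_unique)
qed

lemma QQ_int:
  fixes c :: "real^3"
  shows "set_integrable lborel QQ (\<lambda>p. (a - snd p) *\<^sub>R c)"
    and "(LINT p:QQ|lborel. (a - snd p) *\<^sub>R c) = (4 * a) *\<^sub>R c"
proof -
  have cont: "continuous_on QQ (\<lambda>p. (a - snd p) *\<^sub>R c)"
    by (intro continuous_intros)
  show si: "set_integrable lborel QQ (\<lambda>p. (a - snd p) *\<^sub>R c)"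
    unfolding set_integrable_def
    by (rule borel_integrable_compact[OF _ cont]) (simp add: QQ_cbox)
  have "(LINT p:QQ|lborel. (a - snd p) *\<^sub>R c) = integral QQ (\<lambda>p. (a - snd p) *\<^sub>R c)"
    by (rule set_borel_integral_eq_integral(2)[OF si])
  also have "\<dots> = integral QQ (\<lambda>p. a - snd p) *\<^sub>R c"
  proof -
    have "(\<lambda>p. a - snd p) integrable_on QQ" unfolding QQ_cbox
      by (intro integrable_continuous continuous_intros)
    then show ?thesis by (intro integral_unique has_integral_scaleR_left integrable_integral)
  qed
  also have "integral QQ (\<lambda>p. a - snd p) = integral (cbox (-1) 1) (\<lambda>x. integral (cbox (-1) 1) (\<lambda>y::real. a - snd (x::real, y)))"
    unfolding QQ_cbox
    by (rule integral_prod_continuous) (intro continuous_intros)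
  also have "\<dots> = 4 * a"
    using inner_int by simp
  finally show "(LINT p:QQ|lborel. (a - snd p) *\<^sub>R c) = (4 * a) *\<^sub>R c" .
qed


lemma vel_int_eq:
  assumes a3: "a3 \<in> {-1..1}" and p: "p \<in> QQ"
  shows "vel_integrand KK XX t (XX t (pt 0 a2 a3)) p = (a3 - snd p) *\<^sub>R cvec t"
proof -
  obtain p1 p2 where pp: "p = (p1, p2)" and p1: "p1 \<in> {-1..1}" and p2: "p2 \<in> {-1..1}"
    using p by (cases p) (auto simp: QQ_def)
  have "da2 XX t (pt 0 p1 p2) = vector_derivative (\<lambda>s. XX t (pt 0 s p2)) (at p1 within {-1..1})"
    by (simp add: da2_def)
  also have "\<dots> = axis 2 1"
    by (rule vector_derivative_within_closed_interval[OF _ p1 XX_deriv2]) simp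
  finally have da: "da2 XX t (pt 0 p1 p2) = axis 2 1" .
  define z where "z = XX t (pt 0 a2 a3) - XX t (pt 0 p1 p2)"
  have s: "\<bar>a3 - p2\<bar> \<le> 2" using a3 p2 by auto
  have z1: "z$1 = (a3 - p2) * ggf t" by (simp add: z_def algebra_simps)
  have z3: "z$3 = (a3 - p2) * fff t" by (simp add: z_def algebra_simps)
  have "vel_integrand KK XX t (XX t (pt 0 a2 a3)) p = KK z *v axis 2 1"
    by (simp add: vel_integrand_def pp da z_def)
  also have "\<dots> = kv z" by (simp add: KK_mult)
  also have "\<dots> = (a3 - p2) *\<^sub>R cvec t" by (rule kv_line[OF s z1 z3])
  finally show ?thesis by (simp add: pp)
qed

lemma Xi_E:
  assumes "a \<in> Xi"
  obtains s r where "a = pt 0 s r" "s \<in> {-1..1}" "r \<in> {-1..1}"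
  using assms unfolding Xi_def by auto

lemma ggf_cont: "continuous_on UNIV ggf"
  using ggf_deriv by (intro continuous_at_imp_continuous_on ballI) (rule DERIV_isCont)

lemma fff_cont: "continuous_on UNIV fff"
  using fff_deriv by (intro continuous_at_imp_continuous_on ballI) (rule DERIV_isCont)

theorem theorem4p2:
  shows "\<exists>(K :: real^3 \<Rightarrow> real^3^3) (X :: real \<Rightarrow> real^3 \<Rightarrow> real^3).
           continuous_on UNIV K \<and> admits_flow K X \<and>
           (\<forall>\<^sub>F t in at_top. X t ` Xi \<subseteq> Seg)"
proof (intro exI[of _ KK] exI[of _ XX] conjI)
  show "continuous_on UNIV KK" by (rule KK_cont)
  show "\<forall>\<^sub>F t in at_top. XX t ` Xi \<subseteq> Seg"
    unfolding eventually_at_top_linorder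
  proof (intro exI[of _ 1] allI impI subsetI)
    fix t :: real and x assume t: "t \<ge> 1" and x: "x \<in> XX t ` Xi"
    then obtain a where a: "a \<in> Xi" "x = XX t a" by auto
    then obtain s r where sr: "a = pt 0 s r" "s \<in> {-1..1}" by (auto elim: Xi_E)
    have r0: "rr t = 0" using t by (simp add: rr_def)
    have "x = pt 0 s 0"
      using a sr r0 by (simp add: vec_eq_iff forall_3 ggf_def fff_def)
    then show "x \<in> Seg" using sr by (auto simp: Seg_def)
  qed
  have Q: "{-1..1} \<times> {-1..1} = QQ" by (simp add: QQ_def)
  show "admits_flow KK XX"
    unfolding admits_flow_def
  proof (intro conjI allI impI ballI)
    have c1: "continuous_on UNIV (\<lambda>p::real \<times> (real^3). ggf (fst p))"
      by (rule continuous_on_compose2[OF ggf_cont continuous_on_fst]) auto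
    have c2: "continuous_on UNIV (\<lambda>p::real \<times> (real^3). fff (fst p))"
      by (rule continuous_on_compose2[OF fff_cont continuous_on_fst]) auto
    have "continuous_on UNIV (\<lambda>p::real \<times> (real^3). snd p + ((snd p)$3 * ggf (fst p)) *\<^sub>R axis 1 1
        + ((snd p)$3 * (fff (fst p) - 1)) *\<^sub>R axis 3 1)"
      by (intro continuous_intros c1 c2)
    moreover have "(\<lambda>(t, a). XX t a) = (\<lambda>p::real \<times> (real^3). snd p + ((snd p)$3 * ggf (fst p)) *\<^sub>R axis 1 1
        + ((snd p)$3 * (fff (fst p) - 1)) *\<^sub>R axis 3 1)"
      by (auto simp: XX_def case_prod_beta fun_eq_iff)
    ultimately show "continuous_on ({0..} \<times> Xi) (\<lambda>(t, a). XX t a)"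
      using continuous_on_subset by fastforce
  next
    fix t :: real and a assume "t \<ge> 0" "a \<in> Xi"
    show "(\<lambda>s. XX s a) differentiable (at t within {0..})"
      by (rule differentiableI_vector[OF XX_deriv])
  next
    fix t :: real and a assume "t \<ge> 0" "a \<in> Xi"
    show "(\<lambda>s. XX t (pt (a$1) s (a$3))) differentiable (at (a$2) within {-1..1})"
      by (rule differentiableI_vector[OF XX_deriv2])
  next
    fix t :: real and x assume "t \<ge> 0" "x \<in> XX t ` Xi"
    then obtain a where a: "a \<in> Xi" "x = XX t a" by auto
    then obtain s r where sr: "a = pt 0 s r" "r \<in> {-1..1}" by (auto elim: Xi_E)
    have "set_integrable lborel QQ (vel_integrand KK XX t x) =
          set_integrable lborel QQ (\<lambda>p. (r - snd p) *\<^sub>R cvec t)"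
      by (rule set_integrable_cong) (use a sr vel_int_eq in auto)
    then show "set_integrable lborel ({-1..1} \<times> {-1..1}) (vel_integrand KK XX t x)"
      using QQ_int(1) Q by simp
  next
    fix t :: real and a assume t: "t \<ge> 0" and "a \<in> Xi"
    then obtain s r where sr: "a = pt 0 s r" "r \<in> {-1..1}" by (auto elim: Xi_E)
    have nb: "at t within {0..} \<noteq> bot"
    proof -
      have "t islimpt {t..t+1}" by simp
      then have "t islimpt {0..}" by (rule islimpt_subset) (use t in auto)
      then show ?thesis using trivial_limit_within by blast
    qed
    have "dt XX t a = (4 * a$3) *\<^sub>R cvec t"
      unfolding dt_def by (rule vector_derivative_within[OF nb XX_deriv])
    also have "\<dots> = (LINT p:QQ|lborel. (r - snd p) *\<^sub>R cvec t)"
      using QQ_int(2) sr by simp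
    also have "\<dots> = (LINT p:QQ|lborel. vel_integrand KK XX t (XX t a) p)"
      by (rule set_lebesgue_integral_cong[OF QQ_sets]) (use sr vel_int_eq in auto)
    also have "\<dots> = velocity KK XX t (XX t a)"
      by (simp add: velocity_def Q)
    finally show "dt XX t a = velocity KK XX t (XX t a)" .
  next
    fix a :: "real^3" assume "a \<in> Xi"
    have "rr 0 = 1" by (simp add: rr_def)
    then show "XX 0 a = a" by (simp add: XX_def ggf_def fff_def)
  qed
qed

end
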